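(* Let $\mathbb{F}$ be a field of characteristic not $2$, $\alpha\in\mathbb{F}\setminus\{0,1\}$, and suppose $\mathbb{F}$ contains a root $\zeta$ of $x^2-(4\alpha-2)x+1$. In $\mathfrak{J}(\alpha)$ let $\mu=-\frac{1+\zeta}{4}$, $\nu=-\frac{1+\zeta^{-1}}{4}$, $\mathfrak{s}=\frac{1}{4(\alpha-1)}(\mu\mathfrak{a}+\mathfrak{a}\mathfrak{b}+\nu\mathfrak{b})$, $\mathfrak{t}=\frac{1}{\alpha(\alpha-1)}(\nu\mathfrak{a}+\mathfrak{a}\mathfrak{b}+\mu\mathfrak{b})$, and $1_{\mathfrak{J}}=\frac{2}{\alpha-1}\sigma$. If $\mathfrak{d}=\xi\mathfrak{s}+\frac12 1_{\mathfrak{J}}+\xi^{-1}\mathfrak{t}$, for some $0\neq\xi\in\mathbb{F}$, is a primitive axis of Jordan type half of $\mathfrak{J}(\alpha)$, then $\mathfrak{s}^{\tau_{\mathfrak{d}}}=\xi^{-2}\mathfrak{t}$ and $\mathfrak{t}^{\tau_{\mathfrak{d}}}=\xi^{2}\mathfrak{s}$.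
   Context: $\mathfrak{J}(\alpha)$ is the commutative algebra with basis $\mathfrak{a},\mathfrak{b},\sigma$ and product $\mathfrak{a}^2=\mathfrak{a}$, $\mathfrak{b}^2=\mathfrak{b}$, $\mathfrak{a}\mathfrak{b}=\frac12\mathfrak{a}+\frac12\mathfrak{b}+\sigma$, $\mathfrak{a}\sigma=\frac{\alpha-1}{2}\mathfrak{a}$, $\mathfrak{b}\sigma=\frac{\alpha-1}{2}\mathfrak{b}$, $\sigma^2=\frac{\alpha-1}{2}\sigma$; $1_{\mathfrak{J}}$ is its identity. Its Frobenius form has Gram matrix, in the basis $\mathfrak{a},\mathfrak{b},\sigma$: $(\mathfrak{a},\mathfrak{a})=(\mathfrak{b},\mathfrak{b})=1$, $(\mathfrak{a},\mathfrak{b})=\alpha$, $(\mathfrak{a},\sigma)=(\mathfrak{b},\sigma)=\frac{\alpha-1}{2}$, $(\sigma,\sigma)=\frac{(\alpha-1)^2}{2}$. For $x$ in an algebra $J$, $J_\lambda(x)=\{u:xu=\lambda u\}$; a primitive axis of Jordan type half is $x\neq0$, $x^2=x$, $J=J_1(x)\oplus J_0(x)\oplus J_{1/2}(x)$, $J_1(x)=\mathbb{F}x$, with fusion rules $J_1J_1\subseteq J_1$, $J_1J_0=0$, $J_0J_0\subseteq J_0$, $J_1J_{1/2},J_0J_{1/2}\subseteq J_{1/2}$, $J_{1/2}J_{1/2}\subseteq J_1\oplus J_0$. The Miyamoto involution $\tau_x$ is the automorphism acting as identity on $J_1(x)\oplus J_0(x)$ and $-1$ on $J_{1/2}(x)$.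 *)

theory Defs
  imports Main "HOL-Library.Product_Plus"
begin

text \<open>Elements of the 3-dimensional algebra J(alpha) are coordinate triples
  (coefficients of a, b, sigma) over a field 'a.\<close>

type_synonym 'a trip = "'a \<times> 'a \<times> 'a"

definition smul :: "'a::field \<Rightarrow> 'a trip \<Rightarrow> 'a trip" where
  "smul c v = (c * fst v, c * fst (snd v), c * snd (snd v))"

definition ja :: "'a::field trip" where "ja = (1, 0, 0)"
definition jb :: "'a::field trip" where "jb = (0, 1, 0)"
definition jsig :: "'a::field trip" where "jsig = (0, 0, 1)"

text \<open>Bilinear extension of: a a = a, b b = b, a b = a/2 + b/2 + sigma,
  a sigma = (alpha-1)/2 a, b sigma = (alpha-1)/2 b, sigma sigma = (alpha-1)/2 sigma.\<close>
definition jmult :: "'a::field \<Rightarrow> 'a trip \<Rightarrow> 'a trip \<Rightarrow> 'a trip" where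
  "jmult \<alpha> x y =
    (let x1 = fst x; x2 = fst (snd x); x3 = snd (snd x);
         y1 = fst y; y2 = fst (snd y); y3 = snd (snd y);
         c = (\<alpha> - 1) / 2
     in ( x1*y1 + (x1*y2 + x2*y1)/2 + c*(x1*y3 + x3*y1),
          x2*y2 + (x1*y2 + x2*y1)/2 + c*(x2*y3 + x3*y2),
          (x1*y2 + x2*y1) + c*(x3*y3)))"

definition jone :: "'a::field \<Rightarrow> 'a trip" where
  "jone \<alpha> = smul (2 / (\<alpha> - 1)) jsig"

definition eigsp :: "('v \<Rightarrow> 'v \<Rightarrow> 'v) \<Rightarrow> ('a \<Rightarrow> 'v \<Rightarrow> 'v) \<Rightarrow> 'v \<Rightarrow> 'a \<Rightarrow> 'v set" where
  "eigsp M S x lam = {u. M x u = S lam u}"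

definition primitive_axis_half ::
  "('v::ab_group_add \<Rightarrow> 'v \<Rightarrow> 'v) \<Rightarrow> ('a::field \<Rightarrow> 'v \<Rightarrow> 'v) \<Rightarrow> 'v \<Rightarrow> bool" where
  "primitive_axis_half M S x \<longleftrightarrow>
     (let E1 = eigsp M S x 1; E0 = eigsp M S x 0; Eh = eigsp M S x (1/2) in
       x \<noteq> 0 \<and> M x x = x \<and>
       \<comment> \<open>J = J_1 (+) J_0 (+) J_1/2 (direct sum)\<close>
       (\<forall>u. \<exists>u1 u0 uh. u1 \<in> E1 \<and> u0 \<in> E0 \<and> uh \<in> Eh \<and> u = u1 + u0 + uh) \<and>
       (\<forall>u1 u0 uh v1 v0 vh. u1 \<in> E1 \<and> u0 \<in> E0 \<and> uh \<in> Eh \<and>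
           v1 \<in> E1 \<and> v0 \<in> E0 \<and> vh \<in> Eh \<and> u1 + u0 + uh = v1 + v0 + vh
           \<longrightarrow> u1 = v1 \<and> u0 = v0 \<and> uh = vh) \<and>
       E1 = range (\<lambda>c. S c x) \<and>
       \<comment> \<open>fusion rules\<close>
       (\<forall>u\<in>E1. \<forall>v\<in>E1. M u v \<in> E1) \<and>
       (\<forall>u\<in>E1. \<forall>v\<in>E0. M u v = 0) \<and>
       (\<forall>u\<in>E0. \<forall>v\<in>E0. M u v \<in> E0) \<and>
       (\<forall>u\<in>E1. \<forall>v\<in>Eh. M u v \<in> Eh) \<and>
       (\<forall>u\<in>E0. \<forall>v\<in>Eh. M u v \<in> Eh) \<and>
       (\<forall>u\<in>Eh. \<forall>v\<in>Eh. \<exists>w1\<in>E1. \<exists>w0\<in>E0. M u v = w1 + w0))"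

definition miyamoto ::
  "('v::ab_group_add \<Rightarrow> 'v \<Rightarrow> 'v) \<Rightarrow> ('a::field \<Rightarrow> 'v \<Rightarrow> 'v) \<Rightarrow> 'v \<Rightarrow> 'v \<Rightarrow> 'v" where
  "miyamoto M S x u =
     (THE w. \<exists>u1 u0 uh. u1 \<in> eigsp M S x 1 \<and> u0 \<in> eigsp M S x 0 \<and>
        uh \<in> eigsp M S x (1/2) \<and> u = u1 + u0 + uh \<and> w = u1 + u0 - uh)"

end

theory Submission
  imports Defs
begin

lemma jm_add: "jmult \<alpha> x (u + v) = jmult \<alpha> x u + jmult \<alpha> x v"
proof -
  obtain x1 x2 x3 where "x = (x1,x2,x3)" by (cases x)
  moreover obtain u1 u2 u3 where "u = (u1,u2,u3)" by (cases u)
  moreover obtain v1 v2 v3 where "v = (v1,v2,v3)" by (cases v)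
  ultimately show ?thesis by (simp add: jmult_def Let_def add_divide_distrib[symmetric] algebra_simps)
qed
lemma jm_smul: "jmult \<alpha> x (smul c u) = smul c (jmult \<alpha> x u)"
proof -
  obtain x1 x2 x3 where "x = (x1,x2,x3)" by (cases x)
  moreover obtain u1 u2 u3 where "u = (u1,u2,u3)" by (cases u)
  ultimately show ?thesis by (simp add: jmult_def smul_def Let_def times_divide_eq_right[symmetric] algebra_simps)
qed
lemma jm_comm: "jmult \<alpha> x y = jmult \<alpha> y x"
  by (cases x; cases y) (simp add: jmult_def Let_def algebra_simps)
lemma jm_add_l: "jmult \<alpha> (u + v) x = jmult \<alpha> u x + jmult \<alpha> v x"
  by (metis jm_add jm_comm)
lemma jm_smul_l: "jmult \<alpha> (smul c u) x = smul c (jmult \<alpha> u x)"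
  by (metis jm_smul jm_comm)
lemma jm_one:
  fixes \<alpha> :: "'a::field"
  assumes "(2::'a) \<noteq> 0" "\<alpha> \<noteq> 1"
  shows "jmult \<alpha> (jone \<alpha>) u = u"
proof -
  have "\<alpha> - 1 \<noteq> 0" using assms by simp
  then have key: "(\<alpha> - 1) / 2 * (2 / (\<alpha> - 1)) = 1" using assms by simp
  show ?thesis
    by (cases u) (simp add: jmult_def jone_def smul_def jsig_def Let_def mult.assoc[symmetric] key assms)
qed
lemma smul_one: "smul 1 v = v" by (simp add: smul_def)
lemma smul_zero: "smul 0 v = 0" by (simp add: smul_def zero_prod_def)

lemma miy_eq:
  assumes ax: "primitive_axis_half M S x"
    and h: "u1 \<in> eigsp M S x 1" "u0 \<in> eigsp M S x 0" "uh \<in> eigsp M S x (1/2)"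
    and u: "u = u1 + u0 + uh"
  shows "miyamoto M S x u = u1 + u0 - uh"
  unfolding miyamoto_def
proof (rule the_equality)
  show "\<exists>u1' u0' uh'. u1' \<in> eigsp M S x 1 \<and> u0' \<in> eigsp M S x 0 \<and>
        uh' \<in> eigsp M S x (1/2) \<and> u = u1' + u0' + uh' \<and> u1 + u0 - uh = u1' + u0' - uh'"
    using h u by blast
next
  fix w assume "\<exists>u1' u0' uh'. u1' \<in> eigsp M S x 1 \<and> u0' \<in> eigsp M S x 0 \<and>
        uh' \<in> eigsp M S x (1/2) \<and> u = u1' + u0' + uh' \<and> w = u1' + u0' - uh'"
  then obtain v1 v0 vh where v: "v1 \<in> eigsp M S x 1" "v0 \<in> eigsp M S x 0"
     "vh \<in> eigsp M S x (1/2)" "u = v1 + v0 + vh" "w = v1 + v0 - vh" by blast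
  have U: "\<forall>u1 u0 uh v1 v0 vh. u1 \<in> eigsp M S x 1 \<and> u0 \<in> eigsp M S x 0 \<and> uh \<in> eigsp M S x (1/2) \<and>
           v1 \<in> eigsp M S x 1 \<and> v0 \<in> eigsp M S x 0 \<and> vh \<in> eigsp M S x (1/2) \<and> u1 + u0 + uh = v1 + v0 + vh
           \<longrightarrow> u1 = v1 \<and> u0 = v0 \<and> uh = vh"
    using ax unfolding primitive_axis_half_def Let_def by blast
  have "v1 = u1 \<and> v0 = u0 \<and> vh = uh"
    using U[rule_format, of v1 v0 vh u1 u0 uh] v h u by blast
  then show "w = u1 + u0 - uh" using v by simp
qed

lemma sq_zero:
  fixes \<alpha> p q r :: "'a::field"
  assumes two: "(2::'a) \<noteq> 0" and "p + q + (\<alpha> - 1) * r = 0" "2*p*q + (\<alpha>-1)/2 * r^2 = 0"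
  shows "jmult \<alpha> (p,q,r) (p,q,r) = 0"
proof -
  have e1: "p*p + (p*q+q*p)/2 + (\<alpha>-1)/2*(p*r+r*p) = p * (p + q + (\<alpha> - 1) * r)"
    using two by (simp add: field_simps) 
  have e2: "q*q + (p*q+q*p)/2 + (\<alpha>-1)/2*(q*r+r*q) = q * (p + q + (\<alpha> - 1) * r)"
    using two by (simp add: field_simps) 
  have e3: "(p*q+q*p) + (\<alpha>-1)/2*(r*r) = 2*p*q + (\<alpha>-1)/2 * r^2"
    using two by (simp add: field_simps power2_eq_square) 
  show ?thesis unfolding jmult_def Let_def using assms e1 e2 e3 by (simp add: zero_prod_def)
qed

lemma nz_bit0: "(2::'a::field) \<noteq> 0 \<Longrightarrow> (numeral k::'a) \<noteq> 0 \<Longrightarrow> (numeral (Num.Bit0 k)::'a) \<noteq> 0"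
  by (metis mult_2 mult_eq_0_iff numeral_Bit0)

lemma vecs:
  fixes \<xi> :: "'a::field" and s t w X :: "'a trip"
  assumes xi: "\<xi> \<noteq> 0" and two: "(2::'a) \<noteq> 0"
  defines "D \<equiv> smul \<xi> s + smul (1/2) w + smul (inverse \<xi>) t"
  defines "E \<equiv> w + smul (-1) D"
  defines "H \<equiv> smul \<xi> s + smul (-inverse \<xi>) t"
  shows "smul \<xi> (smul (1/2) s + smul (inverse \<xi>) X) + smul (-inverse \<xi>) (smul \<xi> X + smul (1/2) t) = smul (1/2) H"
    and "s = smul (1/(4*\<xi>)) D + smul (-1/(4*\<xi>)) E + smul (1/(2*\<xi>)) H"
    and "t = smul (\<xi>/4) D + smul (-\<xi>/4) E + smul (-\<xi>/2) H"
    and "smul (1/(4*\<xi>)) D + smul (-1/(4*\<xi>)) E - smul (1/(2*\<xi>)) H = smul (inverse \<xi> ^ 2) t"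
    and "smul (\<xi>/4) D + smul (-\<xi>/4) E - smul (-\<xi>/2) H = smul (\<xi>^2) s"
proof -
  note n4 = nz_bit0[OF two two, simplified]
  note n8 = nz_bit0[OF two n4, simplified]
  note n16 = nz_bit0[OF two n8, simplified]
  note n32 = nz_bit0[OF two n16, simplified]
  note n64 = nz_bit0[OF two n32, simplified]
  note n128 = nz_bit0[OF two n64, simplified]
  note n256 = nz_bit0[OF two n128, simplified]
  note n512 = nz_bit0[OF two n256, simplified]
  note n1024 = nz_bit0[OF two n512, simplified]
  note nz = two n4 n8 n16 n32 n64 n128 n256 n512 n1024
  obtain s1 s2 s3 where S: "s = (s1,s2,s3)" by (cases s)
  obtain t1 t2 t3 where T: "t = (t1,t2,t3)" by (cases t)
  obtain w1 w2 w3 where W: "w = (w1,w2,w3)" by (cases w)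
  obtain x1 x2 x3 where X: "X = (x1,x2,x3)" by (cases X)
  note all = S T W X D_def E_def H_def
  show "smul \<xi> (smul (1/2) s + smul (inverse \<xi>) X) + smul (-inverse \<xi>) (smul \<xi> X + smul (1/2) t) = smul (1/2) H"
    using xi nz unfolding all by (simp add: smul_def field_simps)
  show "s = smul (1/(4*\<xi>)) D + smul (-1/(4*\<xi>)) E + smul (1/(2*\<xi>)) H"
    using xi nz unfolding all by (simp add: smul_def field_simps)
  show "t = smul (\<xi>/4) D + smul (-\<xi>/4) E + smul (-\<xi>/2) H"
    using xi nz unfolding all by (simp add: smul_def field_simps)
  show "smul (1/(4*\<xi>)) D + smul (-1/(4*\<xi>)) E - smul (1/(2*\<xi>)) H = smul (inverse \<xi> ^ 2) t"
    using xi nz unfolding all by (simp add: smul_def field_simps power2_eq_square)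
  show "smul (\<xi>/4) D + smul (-\<xi>/4) E - smul (-\<xi>/2) H = smul (\<xi>^2) s"
    using xi nz unfolding all by (simp add: smul_def field_simps power2_eq_square)
qed

lemma smul_comm: "smul a (smul b u) = smul b (smul a u)"
  by (simp add: smul_def algebra_simps)
lemma eig_smul: "u \<in> eigsp (jmult \<alpha>) smul x l \<Longrightarrow> smul c u \<in> eigsp (jmult \<alpha>) smul x l"
  by (simp add: eigsp_def jm_smul smul_comm)

lemma main:
  fixes \<alpha> \<xi> :: "'a::field"
  assumes two: "(2::'a) \<noteq> 0" and a1: "\<alpha> \<noteq> 1" and xi: "\<xi> \<noteq> 0"
    and ax: "primitive_axis_half (jmult \<alpha>) smul d"
    and dd: "d = smul \<xi> s + smul (1/2) (jone \<alpha>) + smul (inverse \<xi>) t"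
    and ss: "jmult \<alpha> s s = 0" and tt: "jmult \<alpha> t t = 0"
  shows "miyamoto (jmult \<alpha>) smul d s = smul (inverse \<xi> ^ 2) t
       \<and> miyamoto (jmult \<alpha>) smul d t = smul (\<xi> ^ 2) s"
proof -
  let ?M = "jmult \<alpha>"
  let ?one = "jone \<alpha>"
  note V1 = vecs(1)[where s=s and t=t and X="jmult \<alpha> s t", OF xi two]
  note V = vecs(2-5)[where s=s and t=t and w="jone \<alpha>", OF xi two, folded dd]
  have o1: "?M x ?one = x" for x using jm_one[OF two a1] jm_comm by metis
  have o2: "?M ?one x = x" for x using jm_one[OF two a1] by metis
  have dd2: "?M d d = d" using ax unfolding primitive_axis_half_def Let_def by blast
  have E1: "d \<in> eigsp ?M smul d 1"
    using dd2 by (simp add: eigsp_def smul_one)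
  define e where "e = ?one + smul (-1) d"
  have E0: "e \<in> eigsp ?M smul d 0"
  proof -
    have "?M d e = d + smul (-1) d"
      using dd2 by (simp add: e_def jm_add jm_smul o1)
    also have "\<dots> = smul 0 e" by (cases d) (simp add: smul_def zero_prod_def)
    finally show ?thesis by (simp add: eigsp_def)
  qed
  define h where "h = smul \<xi> s + smul (- inverse \<xi>) t"
  have ds: "?M d s = smul (1/2) s + smul (inverse \<xi>) (?M s t)"
    unfolding dd by (simp add: jm_add_l jm_smul_l ss o2 jm_comm[of _ t s]) (simp add: smul_def zero_prod_def)
  have dt: "?M d t = smul \<xi> (?M s t) + smul (1/2) t"
    unfolding dd by (simp add: jm_add_l jm_smul_l tt o2) (simp add: smul_def zero_prod_def)
  have Eh: "h \<in> eigsp ?M smul d (1/2)"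
  proof -
    have "?M d h = smul \<xi> (?M d s) + smul (- inverse \<xi>) (?M d t)"
      by (simp add: h_def jm_add jm_smul)
    also have "\<dots> = smul (1/2) h" unfolding ds dt h_def by (rule V1)
    finally show ?thesis by (simp add: eigsp_def)
  qed
  have m1: "miyamoto ?M smul d s = smul (1/(4*\<xi>)) d + smul (-1/(4*\<xi>)) e - smul (1/(2*\<xi>)) h"
    by (rule miy_eq[OF ax eig_smul[OF E1] eig_smul[OF E0] eig_smul[OF Eh]])
       (unfold e_def h_def, rule V(1))
  have m2: "miyamoto ?M smul d t = smul (\<xi>/4) d + smul (-\<xi>/4) e - smul (-\<xi>/2) h"
    by (rule miy_eq[OF ax eig_smul[OF E1] eig_smul[OF E0] eig_smul[OF Eh]])
       (unfold e_def h_def, rule V(2))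
  show ?thesis unfolding m1 m2 e_def h_def using V(3,4) by simp
qed

lemma scal:
  fixes \<zeta> \<alpha> :: "'a::field"
  assumes z0: "\<zeta> \<noteq> 0" and n4: "(4::'a) \<noteq> 0" and n2: "(2::'a) \<noteq> 0" and n8: "(8::'a) \<noteq> 0" and n16: "(16::'a) \<noteq> 0" and n32: "(32::'a) \<noteq> 0" and n64: "(64::'a) \<noteq> 0" and r4: "4*\<alpha>*\<zeta> = \<zeta>^2 + 2*\<zeta> + 1"
  shows "(- (1 + \<zeta>) / 4 + 1/2) + (- (1 + inverse \<zeta>) / 4 + 1/2) + (\<alpha> - 1) = 0"
    and "2*(- (1 + \<zeta>) / 4 + 1/2)*(- (1 + inverse \<zeta>) / 4+1/2) + (\<alpha>-1)/2 = 0"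
proof -
  have m: "- (1 + \<zeta>) / 4 + 1/2 = (1 - \<zeta>)/4" using n4 n2 by (simp add: field_simps)
  have n: "- (1 + inverse \<zeta>) / 4 + 1/2 = (\<zeta> - 1)/(4*\<zeta>)" using n4 n2 n8 z0 by (simp add: field_simps)
  have "4*\<zeta>*((1 - \<zeta>)/4 + (\<zeta> - 1)/(4*\<zeta>) + (\<alpha> - 1)) = \<zeta>*(1-\<zeta>) + (\<zeta> - 1) + 4*\<alpha>*\<zeta> - 4*\<zeta>"
    using n4 n8 n16 n32 n64 z0 by (simp add: field_simps)
  also have "\<dots> = 0" using r4 by (simp add: algebra_simps power2_eq_square)
  finally show "(- (1 + \<zeta>) / 4 + 1/2) + (- (1 + inverse \<zeta>) / 4 + 1/2) + (\<alpha> - 1) = 0"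
    unfolding m n using z0 n4 by simp
  have "8*\<zeta>*(2*((1 - \<zeta>)/4)*((\<zeta> - 1)/(4*\<zeta>)) + (\<alpha>-1)/2) = 4*\<alpha>*\<zeta> - 4*\<zeta> - (\<zeta> - 1)^2"
    using n4 n2 n8 n16 n32 n64 z0 by (simp add: field_simps power2_eq_square)
  also have "\<dots> = 0" using r4 by (simp add: algebra_simps power2_eq_square)
  finally show "2*(- (1 + \<zeta>) / 4 + 1/2)*(- (1 + inverse \<zeta>) / 4+1/2) + (\<alpha>-1)/2 = 0"
    unfolding m n using z0 n4 n2 n8 by (simp add: mult_eq_0_iff)
qed

theorem lemma3p9:
  fixes \<alpha> \<zeta> \<xi> :: "'a::field"
  assumes char: "(2::'a) \<noteq> 0"
    and a0: "\<alpha> \<noteq> 0" and a1: "\<alpha> \<noteq> 1"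
    and root: "\<zeta>^2 - (4*\<alpha> - 2) * \<zeta> + 1 = 0"
    and xi: "\<xi> \<noteq> 0"
    and axis: "let \<mu> = - (1 + \<zeta>) / 4; \<nu> = - (1 + inverse \<zeta>) / 4;
                   s = smul (1 / (4 * (\<alpha> - 1)))
                         (smul \<mu> ja + jmult \<alpha> ja jb + smul \<nu> jb);
                   t = smul (1 / (\<alpha> * (\<alpha> - 1)))
                         (smul \<nu> ja + jmult \<alpha> ja jb + smul \<mu> jb);
                   d = smul \<xi> s + smul (1/2) (jone \<alpha>) + smul (inverse \<xi>) t
               in primitive_axis_half (jmult \<alpha>) smul d"
  shows "let \<mu> = - (1 + \<zeta>) / 4; \<nu> = - (1 + inverse \<zeta>) / 4;
             s = smul (1 / (4 * (\<alpha> - 1)))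
                   (smul \<mu> ja + jmult \<alpha> ja jb + smul \<nu> jb);
             t = smul (1 / (\<alpha> * (\<alpha> - 1)))
                   (smul \<nu> ja + jmult \<alpha> ja jb + smul \<mu> jb);
             d = smul \<xi> s + smul (1/2) (jone \<alpha>) + smul (inverse \<xi>) t
         in miyamoto (jmult \<alpha>) smul d s = smul (inverse \<xi> ^ 2) t
          \<and> miyamoto (jmult \<alpha>) smul d t = smul (\<xi> ^ 2) s"
proof -
  define \<mu> where "\<mu> = - (1 + \<zeta>) / 4"
  define \<nu> where "\<nu> = - (1 + inverse \<zeta>) / 4"
  define k where "k = 1 / (4 * (\<alpha> - 1))"
  define k' where "k' = 1 / (\<alpha> * (\<alpha> - 1))"
  define s where "s = smul k (smul \<mu> ja + jmult \<alpha> ja jb + smul \<nu> jb)"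
  define t where "t = smul k' (smul \<nu> ja + jmult \<alpha> ja jb + smul \<mu> jb)"
  define d where "d = smul \<xi> s + smul (1/2) (jone \<alpha>) + smul (inverse \<xi>) t"
  note n4 = nz_bit0[OF char char, simplified]
  note n8 = nz_bit0[OF char n4, simplified]
  note n16 = nz_bit0[OF char n8, simplified]
  note n32 = nz_bit0[OF char n16, simplified]
  note n64 = nz_bit0[OF char n32, simplified]
  note n128 = nz_bit0[OF char n64, simplified]
  note n256 = nz_bit0[OF char n128, simplified]
  note n512 = nz_bit0[OF char n256, simplified]
  note n1024 = nz_bit0[OF char n512, simplified]
  note nz = char n4 n8 n16 n32 n64 n128 n256 n512 n1024
  have z0: "\<zeta> \<noteq> 0" using root by auto
  have r4: "4*\<alpha>*\<zeta> = \<zeta>^2 + 2*\<zeta> + 1" using root by (simp add: algebra_simps)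
  have ab: "jmult \<alpha> ja jb = (1/2, 1/2, 1)" by (simp add: jmult_def ja_def jb_def Let_def)
  have sE: "s = (k*(\<mu>+1/2), k*(\<nu>+1/2), k)"
    unfolding s_def ab by (simp add: smul_def ja_def jb_def algebra_simps)
  have tE: "t = (k'*(\<nu>+1/2), k'*(\<mu>+1/2), k')"
    unfolding t_def ab by (simp add: smul_def ja_def jb_def algebra_simps)
  note SC = scal[OF z0 n4 char n8 n16 n32 n64 r4, folded \<mu>_def \<nu>_def]
  have A: "(\<mu>+1/2) + (\<nu>+1/2) + (\<alpha>-1) = 0" by (rule SC(1))
  have B: "2*(\<mu>+1/2)*(\<nu>+1/2) + (\<alpha>-1)/2 = 0" by (rule SC(2))
  have ss: "jmult \<alpha> s s = 0" unfolding sE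
  proof (rule sq_zero[OF char])
    show "k * (\<mu> + 1/2) + k * (\<nu> + 1/2) + (\<alpha> - 1) * k = 0"
    proof -
      have "k * (\<mu> + 1/2) + k * (\<nu> + 1/2) + (\<alpha> - 1) * k = k * ((\<mu>+1/2) + (\<nu>+1/2) + (\<alpha>-1))"
        by (simp add: algebra_simps)
      then show ?thesis using A by simp
    qed
    show "2 * (k * (\<mu> + 1/2)) * (k * (\<nu> + 1/2)) + (\<alpha> - 1) / 2 * k^2 = 0"
    proof -
      have "2 * (k * (\<mu> + 1/2)) * (k * (\<nu> + 1/2)) + (\<alpha> - 1) / 2 * k^2
          = k^2 * (2*(\<mu>+1/2)*(\<nu>+1/2) + (\<alpha>-1)/2)" by (simp add: algebra_simps power2_eq_square)
      then show ?thesis using B by simp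
    qed
  qed
  have tt: "jmult \<alpha> t t = 0" unfolding tE
  proof (rule sq_zero[OF char])
    show "k' * (\<nu> + 1/2) + k' * (\<mu> + 1/2) + (\<alpha> - 1) * k' = 0"
    proof -
      have "k' * (\<nu> + 1/2) + k' * (\<mu> + 1/2) + (\<alpha> - 1) * k' = k' * ((\<mu>+1/2) + (\<nu>+1/2) + (\<alpha>-1))"
        by (simp add: algebra_simps)
      then show ?thesis using A by simp
    qed
    show "2 * (k' * (\<nu> + 1/2)) * (k' * (\<mu> + 1/2)) + (\<alpha> - 1) / 2 * k'^2 = 0"
    proof -
      have "2 * (k' * (\<nu> + 1/2)) * (k' * (\<mu> + 1/2)) + (\<alpha> - 1) / 2 * k'^2
          = k'^2 * (2*(\<mu>+1/2)*(\<nu>+1/2) + (\<alpha>-1)/2)" by (simp add: algebra_simps power2_eq_square)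
      then show ?thesis using B by simp
    qed
  qed
  have ax: "primitive_axis_half (jmult \<alpha>) smul d"
    using axis unfolding Let_def d_def s_def t_def \<mu>_def \<nu>_def k_def k'_def .
  have R: "miyamoto (jmult \<alpha>) smul d s = smul (inverse \<xi> ^ 2) t
       \<and> miyamoto (jmult \<alpha>) smul d t = smul (\<xi> ^ 2) s"
    by (rule main[OF char a1 xi ax d_def ss tt])
  show ?thesis using R unfolding Let_def d_def s_def t_def \<mu>_def \<nu>_def k_def k'_def .
qed

end
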